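(* Let $\lambda_1\neq\lambda_2$ be real numbers, $n_1,n_2$ positive integers, $n=n_1+n_2$, and let $\mathcal{F}$ and $\mathcal{D}$ be finite sets of real numbers with $\{\lambda_1,\lambda_2\}\cap\mathcal{F}=\emptyset$. Then there exists $A\in\mathcal{S}(K_n)$ with spectrum $\{\lambda_1^{(n_1)},\lambda_2^{(n_2)}\}$ such that for every vertex $v$ of $K_n$ the matrix $A(v)$ has no eigenvalue in $\mathcal{F}$, and no diagonal entry of $A$ lies in $\mathcal{D}$.
   Context: $\mathcal{S}(K_n)$ is the set of $n\times n$ real symmetric matrices all of whose off-diagonal entries are nonzero. $A(v)$ denotes the submatrix of $A$ obtained by deleting row and column $v$. $\lambda^{(k)}$ denotes $k$ copies of $\lambda$. *)

theory Defs
  imports "Jordan_Normal_Form.Char_Poly" "Jordan_Normal_Form.Determinant"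
begin

definition S_K :: "nat \<Rightarrow> real mat set" where
  "S_K n = {A. A \<in> carrier_mat n n \<and> A\<^sup>T = A \<and>
              (\<forall>i<n. \<forall>j<n. i \<noteq> j \<longrightarrow> A $$ (i, j) \<noteq> 0)}"

definition del_vertex :: "real mat \<Rightarrow> nat \<Rightarrow> real mat" where
  "del_vertex A v = mat_delete A v v"

(* spectrum (as a multiset, via the characteristic polynomial) is
   {l1^(n1), l2^(n2)} *)
definition has_spectrum2 :: "real mat \<Rightarrow> real \<Rightarrow> nat \<Rightarrow> real \<Rightarrow> nat \<Rightarrow> bool" where
  "has_spectrum2 A l1 n1 l2 n2 \<longleftrightarrow>
     char_poly A = [:-l1, 1:] ^ n1 * [:-l2, 1:] ^ n2"

end

theory Submission
  imports Defs
begin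

definition blk :: "nat \<Rightarrow> nat \<Rightarrow> 'a \<Rightarrow> 'a \<Rightarrow> 'a \<Rightarrow> 'a \<Rightarrow> 'a \<Rightarrow> 'a::field mat" where
"blk m1 m2 a c p q g = mat (m1+m2) (m1+m2) (\<lambda>(i,j). if i<m1 \<and> j<m1 then (if i=j then a else 0) + p
   else if m1 \<le> i \<and> m1 \<le> j then (if i=j then c else 0) + q else g)"

lemma blk_carrier: "blk m1 m2 a c p q g \<in> carrier_mat (m1+m2) (m1+m2)"
  unfolding blk_def by auto

lemma blk_row:
  assumes v: "v \<in> carrier_vec (m1+m2)" and i: "i < m1+m2"
  shows "(blk m1 m2 a c p q g *\<^sub>v v) $ i =
     (if i < m1 then a * v$i + p * (\<Sum>j\<in>{0..<m1}. v$j) + g * (\<Sum>j\<in>{m1..<m1+m2}. v$j)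
      else c * v$i + q * (\<Sum>j\<in>{m1..<m1+m2}. v$j) + g * (\<Sum>j\<in>{0..<m1}. v$j))"
proof -
  let ?M = "blk m1 m2 a c p q g"
  have "(?M *\<^sub>v v) $ i = (\<Sum>j\<in>{0..<m1+m2}. ?M $$ (i,j) * v$j)"
    using v i unfolding blk_def by (auto simp: scalar_prod_def)
  also have "\<dots> = (\<Sum>j\<in>{0..<m1}. ?M $$ (i,j) * v$j) + (\<Sum>j\<in>{m1..<m1+m2}. ?M $$ (i,j) * v$j)"
    by (simp add: sum.atLeastLessThan_concat)
  finally have e: "(?M *\<^sub>v v) $ i = (\<Sum>j\<in>{0..<m1}. ?M $$ (i,j) * v$j) + (\<Sum>j\<in>{m1..<m1+m2}. ?M $$ (i,j) * v$j)" .
  show ?thesis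
  proof (cases "i < m1")
    case True
    have 1: "(\<Sum>j\<in>{0..<m1}. ?M $$ (i,j) * v$j) = (\<Sum>j\<in>{0..<m1}. (if i = j then a * v$j else 0) + p * v$j)"
      by (rule sum.cong, insert True i, auto simp: blk_def algebra_simps)
    have 2: "(\<Sum>j\<in>{m1..<m1+m2}. ?M $$ (i,j) * v$j) = (\<Sum>j\<in>{m1..<m1+m2}. g * v$j)"
      by (rule sum.cong, insert True i, auto simp: blk_def)
    show ?thesis using True unfolding e 1 2 by (simp add: sum.distrib sum_distrib_left)
  next
    case False
    have 1: "(\<Sum>j\<in>{m1..<m1+m2}. ?M $$ (i,j) * v$j) = (\<Sum>j\<in>{m1..<m1+m2}. (if i = j then c * v$j else 0) + q * v$j)"
      by (rule sum.cong, insert False i, auto simp: blk_def algebra_simps)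
    have 2: "(\<Sum>j\<in>{0..<m1}. ?M $$ (i,j) * v$j) = (\<Sum>j\<in>{0..<m1}. g * v$j)"
      by (rule sum.cong, insert False i, auto simp: blk_def)
    show ?thesis using False i unfolding e 1 2 by (simp add: sum.distrib sum_distrib_left)
  qed
qed

lemma blk_eig:
  assumes "eigenvalue (blk m1 m2 a c p q g) f"
  shows "f = a \<or> f = c \<or> (a + of_nat m1 * p - f) * (c + of_nat m2 * q - f) = of_nat m1 * of_nat m2 * g * g"
proof -
  let ?M = "blk m1 m2 a c p q g"
  let ?n = "m1+m2"
  obtain v where v: "v \<in> carrier_vec ?n" "v \<noteq> 0\<^sub>v ?n" "?M *\<^sub>v v = f \<cdot>\<^sub>v v"
    using assms unfolding eigenvalue_def eigenvector_def blk_def by auto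
  define s1 where "s1 = (\<Sum>j\<in>{0..<m1}. v$j)"
  define s2 where "s2 = (\<Sum>j\<in>{m1..<?n}. v$j)"
  have r: "f * v$i = (if i < m1 then a * v$i + p * s1 + g * s2 else c * v$i + q * s2 + g * s1)"
    if i: "i < ?n" for i
  proof -
    have "f * v$i = (?M *\<^sub>v v) $ i" using v(1,3) i by simp
    then show ?thesis using blk_row[OF v(1) i] unfolding s1_def s2_def by simp
  qed
  have r1: "f * v$i = a * v$i + p * s1 + g * s2" if "i < m1" for i using r[of i] that by simp
  have r2: "f * v$i = c * v$i + q * s2 + g * s1" if "m1 \<le> i" "i < ?n" for i using r[of i] that by simp
  have S1: "f * s1 = a * s1 + of_nat m1 * p * s1 + of_nat m1 * g * s2"
  proof -
    have "f * s1 = (\<Sum>j\<in>{0..<m1}. f * v$j)" unfolding s1_def by (simp add: sum_distrib_left)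
    also have "\<dots> = (\<Sum>j\<in>{0..<m1}. a * v$j + (p * s1 + g * s2))" by (rule sum.cong, auto simp: r1)
    also have "\<dots> = a * s1 + of_nat m1 * (p * s1 + g * s2)" unfolding s1_def
      by (simp add: sum.distrib sum_distrib_left)
    finally show ?thesis by (simp add: algebra_simps)
  qed
  have S2: "f * s2 = c * s2 + of_nat m2 * q * s2 + of_nat m2 * g * s1"
  proof -
    have "f * s2 = (\<Sum>j\<in>{m1..<?n}. f * v$j)" unfolding s2_def by (simp add: sum_distrib_left)
    also have "\<dots> = (\<Sum>j\<in>{m1..<?n}. c * v$j + (q * s2 + g * s1))" by (rule sum.cong, auto simp: r2)
    also have "\<dots> = c * s2 + of_nat m2 * (q * s2 + g * s1)" unfolding s2_def
      by (simp add: sum.distrib sum_distrib_left)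
    finally show ?thesis by (simp add: algebra_simps)
  qed
  define X where "X = a + of_nat m1 * p - f"
  define Y where "Y = c + of_nat m2 * q - f"
  have X: "X * s1 = - (of_nat m1 * g * s2)" using S1 unfolding X_def by (simp add: algebra_simps)
  have Y: "Y * s2 = - (of_nat m2 * g * s1)" using S2 unfolding Y_def by (simp add: algebra_simps)
  have XY1: "X * Y * s1 = of_nat m1 * of_nat m2 * g * g * s1"
  proof -
    have "X * Y * s1 = Y * (X * s1)" by (simp add: algebra_simps)
    also have "\<dots> = - (of_nat m1 * g) * (Y * s2)" unfolding X by (simp add: algebra_simps)
    finally show ?thesis unfolding Y by (simp add: algebra_simps)
  qed
  have XY2: "X * Y * s2 = of_nat m1 * of_nat m2 * g * g * s2"
  proof -
    have "X * Y * s2 = X * (Y * s2)" by (simp add: algebra_simps)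
    also have "\<dots> = - (of_nat m2 * g) * (X * s1)" unfolding Y by (simp add: algebra_simps)
    finally show ?thesis unfolding X by (simp add: algebra_simps)
  qed
  show ?thesis
  proof (cases "s1 = 0 \<and> s2 = 0")
    case True
    from v(1,2) obtain i where i: "i < ?n" "v$i \<noteq> 0" by (metis carrier_vecD eq_vecI index_zero_vec)
    show ?thesis
    proof (cases "i < m1")
      case c: True
      then have "f * v$i = a * v$i" using r1[OF c] True by simp
      then show ?thesis using i by simp
    next
      case c: False
      then have "f * v$i = c * v$i" using r2[of i] i True by simp
      then show ?thesis using i by simp
    qed
  next
    case False
    then have "X * Y = of_nat m1 * of_nat m2 * g * g" using XY1 XY2 by auto
    then show ?thesis unfolding X_def Y_def by simp
  qed
qed

lemma trace_delete:
  fixes A :: "'a::comm_ring_1 mat"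
  assumes A: "A \<in> carrier_mat (Suc N) (Suc N)" and i: "i < Suc N"
  shows "(\<Sum>k\<in>{0..<N}. mat_delete A i i $$ (k,k)) = (\<Sum>j\<in>{0..<Suc N}. A $$ (j,j)) - A $$ (i,i)"
proof -
  have "(\<Sum>k\<in>{0..<N}. mat_delete A i i $$ (k,k)) = (\<Sum>k\<in>{0..<N}. A $$ (insert_index i k, insert_index i k))"
    by (rule sum.cong, insert A i, auto simp: mat_delete_index)
  also have "\<dots> = (\<Sum>j\<in>insert_index i ` {0..<N}. A $$ (j,j))"
    by (subst sum.reindex, rule insert_index_inj_on, simp)
  also have "\<dots> = (\<Sum>j\<in>{0..<Suc N} - {i}. A $$ (j,j))" using insert_index_image[OF i] by simp
  also have "\<dots> = (\<Sum>j\<in>{0..<Suc N}. A $$ (j,j)) - A $$ (i,i)" using i by (simp add: sum_diff1)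
  finally show ?thesis .
qed

lemma coeff_char_poly_trace:
  fixes A :: "'a::field_char_0 mat"
  assumes "A \<in> carrier_mat n n" "n \<ge> 1"
  shows "coeff (char_poly A) (n-1) = - (\<Sum>i\<in>{0..<n}. A $$ (i,i))"
  using assms
proof (induction n arbitrary: A)
  case 0 then show ?case by simp
next
  case (Suc N)
  note A = Suc.prems(1)
  show ?case
  proof (cases N)
    case 0
    have "coeff (char_poly A) (Suc N - 1) = poly (char_poly A) 0" using 0 by (simp add: poly_0_coeff_0)
    also have "\<dots> = det (- (char_matrix A 0))" using char_poly_matrix[OF A] by simp
    also have "\<dots> = - A $$ (0,0)" using A 0 by (subst det_single, auto simp: char_matrix_def)
    finally show ?thesis using 0 by simp
  next
    case (Suc m)
    define T where "T = (\<Sum>j\<in>{0..<Suc N}. A $$ (j,j))"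
    have "pderiv (char_poly A) = (\<Sum>i<Suc N. char_poly (mat_delete A i i))" by (rule pderiv_char_poly[OF A])
    then have "coeff (pderiv (char_poly A)) m = (\<Sum>i<Suc N. coeff (char_poly (mat_delete A i i)) m)"
      by (simp add: coeff_sum)
    also have "\<dots> = (\<Sum>i<Suc N. - (T - A $$ (i,i)))"
    proof (rule sum.cong[OF refl])
      fix i assume i: "i \<in> {..<Suc N}"
      have c: "mat_delete A i i \<in> carrier_mat N N" using mat_delete_carrier[OF A] by simp
      have "coeff (char_poly (mat_delete A i i)) m = - (\<Sum>k\<in>{0..<N}. mat_delete A i i $$ (k,k))"
        using Suc.IH[OF c] Suc by simp
      then show "coeff (char_poly (mat_delete A i i)) m = - (T - A $$ (i,i))"
        using trace_delete[OF A, of i] i unfolding T_def by simp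
    qed
    also have "\<dots> = - (of_nat (Suc N) * T - T)"
      by (simp add: sum_subtractf T_def atLeast0LessThan sum_negf)
    also have "\<dots> = of_nat N * (- T)" by (simp add: algebra_simps)
    finally have "of_nat N * coeff (char_poly A) N = of_nat N * (- T)"
      using Suc by (simp add: coeff_pderiv)
    moreover have "of_nat N \<noteq> (0::'a)" using Suc by (simp del: of_nat_Suc)
    ultimately have "coeff (char_poly A) N = - T" by (metis mult_left_cancel)
    then show ?thesis unfolding T_def by simp
  qed
qed

lemma prod_lin_coeff:
  fixes as :: "'a::comm_ring_1 list"
  shows "coeff (\<Prod>a\<leftarrow>as. [:-a,1:]) (length as) = 1 \<and>
    (as \<noteq> [] \<longrightarrow> coeff (\<Prod>a\<leftarrow>as. [:-a,1:]) (length as - 1) = - sum_list as)"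
proof (induction as)
  case Nil then show ?case by simp
next
  case (Cons a as)
  define q where "q = (\<Prod>a\<leftarrow>as. [:-a,1:])"
  have dq: "degree q = length as" unfolding q_def by (rule degree_linear_factors)
  have p: "(\<Prod>a\<leftarrow>a#as. [:-a,1:]) = Polynomial.smult (-a) q + pCons 0 q" unfolding q_def by simp
  have c1: "coeff q (Suc (length as)) = 0" using dq by (simp add: coeff_eq_0)
  have "coeff (\<Prod>a\<leftarrow>a#as. [:-a,1:]) (length (a#as)) = 1"
    unfolding p using c1 Cons.IH unfolding q_def by simp
  moreover have "coeff (\<Prod>a\<leftarrow>a#as. [:-a,1:]) (length (a#as) - 1) = - sum_list (a#as)"
  proof (cases as)
    case Nil then show ?thesis by simp
  next
    case (Cons b bs)
    then have "length as = Suc (length as - 1)" by simp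
    then have "coeff (pCons 0 q) (length as) = coeff q (length as - 1)" by (metis coeff_pCons_Suc)
    then show ?thesis unfolding p using Cons.IH Cons unfolding q_def by simp
  qed
  ultimately show ?case by simp
qed

lemma prod_lin_two:
  fixes x y :: "'a::comm_ring_1"
  assumes "set as \<subseteq> {x,y}" "x \<noteq> y"
  shows "(\<Prod>a\<leftarrow>as. [:-a,1:]) = [:-x,1:]^count_list as x * [:-y,1:]^(length as - count_list as x)
     \<and> sum_list as = of_nat (count_list as x) * x + of_nat (length as - count_list as x) * y
     \<and> count_list as x \<le> length as"
  using assms
proof (induction as)
  case Nil then show ?case by simp
next
  case (Cons a as)
  then have IH: "(\<Prod>a\<leftarrow>as. [:-a,1:]) = [:-x,1:]^count_list as x * [:-y,1:]^(length as - count_list as x)"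
     "sum_list as = of_nat (count_list as x) * x + of_nat (length as - count_list as x) * y"
     "count_list as x \<le> length as" by auto
  show ?case
  proof (cases "a = x")
    case True
    then show ?thesis using IH by (simp add: algebra_simps)
  next
    case False
    then have a: "a = y" using Cons.prems by auto
    have s: "length as - count_list as x + 1 = Suc (length as - count_list as x)" by simp
    have s2: "Suc (length as) - count_list as x = Suc (length as - count_list as x)" using IH(3) by simp
    have p1: "(\<Prod>a\<leftarrow>a#as. [:-a,1:]) = [:-y,1:] * ([:-x,1:]^count_list as x * [:-y,1:]^(length as - count_list as x))"
      by (simp only: list.map prod_list.Cons IH(1) a)
    also have "\<dots> = [:-x,1:]^count_list (a#as) x * [:-y,1:]^(length (a#as) - count_list (a#as) x)"
    proof -
      have gen: "\<And>X Y::'a poly. \<And>m. Y * (X * Y^m) = X * Y^Suc m" by (simp add: algebra_simps)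
      have "count_list (a#as) x = count_list as x" using False by simp
      moreover have "length (a#as) - count_list as x = Suc (length as - count_list as x)" using s2 by simp
      ultimately show ?thesis by (simp only: gen)
    qed
    finally show ?thesis using IH a assms(2) s2 by (simp add: algebra_simps)
  qed
qed

lemma map_poly_of_real_inj:
  fixes p q :: "real poly"
  assumes "map_poly complex_of_real p = map_poly complex_of_real q"
  shows "p = q"
proof (rule poly_eqI)
  fix i
  have "coeff (map_poly complex_of_real p) i = coeff (map_poly complex_of_real q) i" using assms by simp
  then show "coeff p i = coeff q i" by (simp add: coeff_map_poly)
qed

lemma blk_map: "map_mat complex_of_real (blk m1 m2 a c p q g) =
   blk m1 m2 (complex_of_real a) (complex_of_real c) (complex_of_real p) (complex_of_real q) (complex_of_real g)"
  by (rule eq_matI, auto simp: blk_def)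

lemma blk_trace:
  "(\<Sum>i\<in>{0..<m1+m2}. blk m1 m2 a c p q g $$ (i,i)) = of_nat m1 * (a + p) + of_nat m2 * (c + q)"
proof -
  have "(\<Sum>i\<in>{0..<m1+m2}. blk m1 m2 a c p q g $$ (i,i)) =
     (\<Sum>i\<in>{0..<m1}. blk m1 m2 a c p q g $$ (i,i)) + (\<Sum>i\<in>{m1..<m1+m2}. blk m1 m2 a c p q g $$ (i,i))"
    by (simp add: sum.atLeastLessThan_concat)
  also have "(\<Sum>i\<in>{0..<m1}. blk m1 m2 a c p q g $$ (i,i)) = (\<Sum>i\<in>{0..<m1}. a + p)"
    by (rule sum.cong, auto simp: blk_def)
  also have "(\<Sum>i\<in>{m1..<m1+m2}. blk m1 m2 a c p q g $$ (i,i)) = (\<Sum>i\<in>{m1..<m1+m2}. c + q)"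
    by (rule sum.cong, auto simp: blk_def)
  finally show ?thesis by simp
qed

lemma blk_transpose: "(blk m1 m2 a c p q g)\<^sup>T = blk m1 m2 a c p q g"
  by (rule eq_matI, auto simp: blk_def)

lemma blk_delete1:
  assumes "v < m1"
  shows "del_vertex (blk m1 m2 a c p q g) v = blk (m1 - 1) m2 a c p q g"
  using assms unfolding del_vertex_def mat_delete_def
  by (intro eq_matI, auto simp: blk_def)

lemma blk_delete2:
  assumes "m1 \<le> v" "v < m1 + m2"
  shows "del_vertex (blk m1 m2 a c p q g) v = blk m1 (m2 - 1) a c p q g"
  using assms unfolding del_vertex_def mat_delete_def
  by (intro eq_matI, auto simp: blk_def)

lemma spectrum_part:
  fixes l1 l2 b g :: real
  assumes "l1 \<noteq> l2" "n1 > 0" "n2 > 0"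
    and gg: "real n1 * real n2 * (g * g) = b * (l2 - l1 - b)"
  shows "has_spectrum2 (blk n1 n2 l1 l2 (b / real n1) (- b / real n2) g) l1 n1 l2 n2"
proof -
  define A where "A = blk n1 n2 l1 l2 (b / real n1) (- b / real n2) g"
  let ?i = "complex_of_real"
  define AC where "AC = map_mat ?i A"
  let ?n = "n1 + n2"
  have A: "A \<in> carrier_mat ?n ?n" unfolding A_def by (rule blk_carrier)
  have AC: "AC \<in> carrier_mat ?n ?n" unfolding AC_def using A by simp
  have ACb: "AC = blk n1 n2 (?i l1) (?i l2) (?i (b / real n1)) (?i (- b / real n2)) (?i g)"
    unfolding AC_def A_def by (rule blk_map)
  obtain as where as: "char_poly AC = (\<Prod>a\<leftarrow>as. [:-a,1:])" "length as = ?n"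
    using char_poly_factorized[OF AC] by blast
  have e1: "of_nat n1 * ?i (b / real n1) = ?i b" using assms(2)
    by (metis of_real_mult of_real_of_nat_eq nonzero_mult_div_cancel_left of_nat_0_less_iff
         less_irrefl times_divide_eq_right)
  have e2: "of_nat n2 * ?i (- b / real n2) = - ?i b" using assms(3)
    by (metis of_real_mult of_real_of_nat_eq nonzero_mult_div_cancel_left of_nat_0_less_iff
         less_irrefl times_divide_eq_right of_real_minus)
  have e3: "of_nat n1 * of_nat n2 * ?i g * ?i g = ?i b * (?i l2 - ?i l1 - ?i b)"
  proof -
    have "?i (real n1 * real n2 * (g * g)) = ?i (b * (l2 - l1 - b))" using gg by simp
    then show ?thesis by (simp add: algebra_simps)
  qed
  have sub: "set as \<subseteq> {?i l1, ?i l2}"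
  proof
    fix z assume z: "z \<in> set as"
    have "poly (char_poly AC) z = 0" unfolding as(1) using z
      by (induction as, auto)
    then have "eigenvalue AC z" using eigenvalue_root_char_poly[OF AC] by simp
    then have "z = ?i l1 \<or> z = ?i l2 \<or>
       (?i l1 + of_nat n1 * ?i (b / real n1) - z) * (?i l2 + of_nat n2 * ?i (- b / real n2) - z)
        = of_nat n1 * of_nat n2 * ?i g * ?i g"
      unfolding ACb by (rule blk_eig)
    then have "z = ?i l1 \<or> z = ?i l2 \<or>
       (?i l1 + ?i b - z) * (?i l2 - ?i b - z) = ?i b * (?i l2 - ?i l1 - ?i b)"
      unfolding e1 e2 e3 by simp
    moreover have "(?i l1 + ?i b - z) * (?i l2 - ?i b - z) - ?i b * (?i l2 - ?i l1 - ?i b)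
        = (?i l1 - z) * (?i l2 - z)" by (simp add: algebra_simps)
    ultimately show "z \<in> {?i l1, ?i l2}" by auto
  qed
  have ne: "?i l1 \<noteq> ?i l2" using assms(1) by simp
  define k where "k = count_list as (?i l1)"
  from prod_lin_two[OF sub ne] have
    P: "char_poly AC = [:-?i l1,1:]^k * [:-?i l2,1:]^(?n - k)"
    and S: "sum_list as = of_nat k * ?i l1 + of_nat (?n - k) * ?i l2" and kn: "k \<le> ?n"
    unfolding k_def as(2) as(1)[symmetric] by auto
  have "coeff (char_poly AC) (?n - 1) = - sum_list as"
    using prod_lin_coeff[of as] as assms(2) by auto
  moreover have "coeff (char_poly AC) (?n - 1) = - (\<Sum>i\<in>{0..<?n}. AC $$ (i,i))"
    using coeff_char_poly_trace[OF AC] assms(2) by simp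
  moreover have "(\<Sum>i\<in>{0..<?n}. AC $$ (i,i)) = of_nat n1 * ?i l1 + of_nat n2 * ?i l2"
    unfolding ACb blk_trace using assms(2,3) by (simp add: algebra_simps e1 e2)
  ultimately have "of_nat k * ?i l1 + of_nat (?n - k) * ?i l2 = of_nat n1 * ?i l1 + of_nat n2 * ?i l2"
    using S by (metis minus_diff_eq minus_equation_iff)
  then have "(of_nat k - of_nat n1) * (?i l1 - ?i l2) = (0::complex)"
    using kn by (simp add: of_nat_diff algebra_simps)
  then have "(of_nat k :: complex) = of_nat n1" using ne by simp
  then have k: "k = n1" by simp
  have "map_poly ?i (char_poly A) = char_poly AC"
    unfolding AC_def by (rule of_real_hom.char_poly_hom[OF A, symmetric])
  also have "\<dots> = map_poly ?i ([:-l1,1:]^n1 * [:-l2,1:]^n2)"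
  proof -
    interpret m: map_poly_comm_ring_hom "complex_of_real" ..
    show ?thesis unfolding P k by (simp add: m.hom_mult m.hom_power)
  qed
  finally have "char_poly A = [:-l1,1:]^n1 * [:-l2,1:]^n2" by (rule map_poly_of_real_inj)
  then show ?thesis unfolding has_spectrum2_def A_def .
qed

lemma alg1:
  fixes m x b l1 l2 f G L2 M1 :: real
  assumes "b = m * x" "G = (m - 1) * x * (l2 - l1 - b)" "L2 = l2 - b" "M1 = m - 1"
  shows "(l1 + M1 * x - f) * (L2 - f) - G = (l1 - f) * (l2 - x - f)"
  unfolding assms(2,3,4) assms(1) by (simp add: algebra_simps)

lemma alg2:
  fixes m y b l1 l2 f G L1 Y :: real
  assumes "b = m * y" "G = (m - 1) * y * (l2 - l1 - b)" "L1 = l1 + b" "Y = - ((m - 1) * y)"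
  shows "(L1 - f) * (l2 + Y - f) - G = (l2 - f) * (l1 + y - f)"
  unfolding assms(2,3,4) assms(1) by (simp add: algebra_simps)

theorem corollary4p4:
  fixes l1 l2 :: real and n1 n2 :: nat and F D :: "real set"
  assumes "l1 \<noteq> l2" and "n1 > 0" and "n2 > 0"
    and "finite F" and "finite D"
    and "{l1, l2} \<inter> F = {}"
  shows "\<exists>A \<in> S_K (n1 + n2).
           has_spectrum2 A l1 n1 l2 n2 \<and>
           (\<forall>v < n1 + n2. \<forall>f \<in> F. \<not> eigenvalue (del_vertex A v) f) \<and>
           (\<forall>i < n1 + n2. A $$ (i, i) \<notin> D)"
proof -
  define d where "d = l2 - l1"
  have d0: "d \<noteq> 0" using assms(1) unfolding d_def by simp
  define Bad where "Bad = (\<lambda>x. real n1 * (x - l1)) ` D \<union> (\<lambda>x. real n2 * (l2 - x)) ` D \<union>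
      (\<lambda>f. real n1 * (l2 - f)) ` F \<union> (\<lambda>f. real n2 * (f - l1)) ` F"
  have fB: "finite Bad" unfolding Bad_def using assms(4,5) by simp
  have "infinite ({0<..<1::real} - (\<lambda>x. x / d) ` Bad)"
    using Diff_infinite_finite[OF finite_imageI[OF fB] infinite_Ioo[of "0::real" 1]] by simp
  then obtain t where t: "t \<in> {0<..<1::real}" "t \<notin> (\<lambda>x. x / d) ` Bad"
    using infinite_imp_nonempty by blast
  define b where "b = t * d"
  have bB: "b \<notin> Bad"
  proof
    assume "b \<in> Bad"
    then have "b / d \<in> (\<lambda>x. x / d) ` Bad" by (rule imageI)
    then show False using t(2) d0 unfolding b_def by simp
  qed
  have b0: "b \<noteq> 0" using t d0 unfolding b_def by simp
  have pos: "b * (d - b) > 0"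
  proof -
    have "b * (d - b) = t * (1 - t) * (d * d)" unfolding b_def by (simp add: algebra_simps)
    moreover have "t * (1 - t) > 0" using t(1) by simp
    moreover have "d * d > 0" using d0 by (simp add: zero_less_mult_iff linorder_neq_iff disj_commute)
    ultimately show ?thesis by simp
  qed
  define g where "g = sqrt (b * (d - b) / (real n1 * real n2))"
  have g0: "g > 0" unfolding g_def using pos assms(2,3) by simp
  have gg: "real n1 * real n2 * (g * g) = b * (l2 - l1 - b)"
  proof -
    have "g * g = b * (d - b) / (real n1 * real n2)" unfolding g_def using pos assms(2,3)
      by (simp add: less_imp_le)
    then show ?thesis using assms(2,3) unfolding d_def by simp
  qed
  define A where "A = blk n1 n2 l1 l2 (b / real n1) (- b / real n2) g"
  have "A \<in> S_K (n1 + n2)"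
  proof -
    have nz: "b / real n1 \<noteq> 0" "- b / real n2 \<noteq> 0" "g \<noteq> 0" using b0 g0 assms(2,3) by auto
    have "blk n1 n2 l1 l2 (b / real n1) (- b / real n2) g $$ (i,j) \<noteq> 0"
      if "i < n1 + n2" "j < n1 + n2" "i \<noteq> j" for i j
      using that nz unfolding blk_def by simp
    then show ?thesis unfolding S_K_def A_def using blk_carrier blk_transpose by blast
  qed
  moreover have "has_spectrum2 A l1 n1 l2 n2"
    unfolding A_def by (rule spectrum_part[OF assms(1-3) gg])
  moreover have "\<forall>v < n1 + n2. \<forall>f \<in> F. \<not> eigenvalue (del_vertex A v) f"
  proof (intro allI impI ballI notI)
    fix v f assume v: "v < n1 + n2" and f: "f \<in> F" and ev: "eigenvalue (del_vertex A v) f"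
    have f1: "f \<noteq> l1" "f \<noteq> l2" using f assms(6) by auto
    show False
    proof (cases "v < n1")
      case True
      have "eigenvalue (blk (n1 - 1) n2 l1 l2 (b / real n1) (- b / real n2) g) f"
        using ev unfolding A_def blk_delete1[OF True] .
      from blk_eig[OF this] f1 have
        q: "(l1 + real (n1 - 1) * (b / real n1) - f) * (l2 + real n2 * (- b / real n2) - f) =
            real (n1 - 1) * real n2 * g * g" by simp
      have "(l1 + real (n1 - 1) * (b / real n1) - f) * (l2 + real n2 * (- b / real n2) - f) -
            real (n1 - 1) * real n2 * g * g = (l1 - f) * (l2 - b / real n1 - f)"
      proof (rule alg1)
        show "b = real n1 * (b / real n1)" using assms(2) by simp
        have "real n2 * (g * g) = (b / real n1) * (l2 - l1 - b)" using gg assms(2)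
          by (metis nonzero_mult_div_cancel_left of_nat_0_less_iff less_irrefl mult.assoc times_divide_eq_left)
        then show "real (n1 - 1) * real n2 * g * g = (real n1 - 1) * (b / real n1) * (l2 - l1 - b)"
          using assms(2) by (simp add: of_nat_diff mult.assoc)
        show "l2 + real n2 * (- b / real n2) = l2 - b" using assms(3) by simp
        show "real (n1 - 1) = real n1 - 1" using assms(2) by (simp add: of_nat_diff)
      qed
      with q have "(l1 - f) * (l2 - b / real n1 - f) = 0" by simp
      then have "f = l2 - b / real n1" using f1 by simp
      then have "b = real n1 * (l2 - f)" using assms(2) by (simp add: field_simps)
      then have "b \<in> Bad" unfolding Bad_def using f by blast
      then show False using bB by simp
    next
      case False
      have "eigenvalue (blk n1 (n2 - 1) l1 l2 (b / real n1) (- b / real n2) g) f"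
      proof -
        have "del_vertex A v = blk n1 (n2 - 1) l1 l2 (b / real n1) (- b / real n2) g"
          unfolding A_def using False v by (intro blk_delete2) auto
        then show ?thesis using ev by simp
      qed
      from blk_eig[OF this] f1 have
        q: "(l1 + real n1 * (b / real n1) - f) * (l2 + real (n2 - 1) * (- b / real n2) - f) =
            real n1 * real (n2 - 1) * g * g" by simp
      have "(l1 + real n1 * (b / real n1) - f) * (l2 + real (n2 - 1) * (- b / real n2) - f) -
            real n1 * real (n2 - 1) * g * g = (l2 - f) * (l1 + b / real n2 - f)"
      proof (rule alg2)
        show "b = real n2 * (b / real n2)" using assms(3) by simp
        have "real n1 * (g * g) = (b / real n2) * (l2 - l1 - b)" using gg assms(3)
          by (metis nonzero_mult_div_cancel_left of_nat_0_less_iff less_irrefl mult.assoc mult.left_commute times_divide_eq_left)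
        moreover have "real n1 * real (n2 - 1) * g * g = (real n2 - 1) * (real n1 * (g * g))"
          using assms(3) by (simp add: of_nat_diff mult_ac)
        ultimately show "real n1 * real (n2 - 1) * g * g = (real n2 - 1) * (b / real n2) * (l2 - l1 - b)"
          by (simp add: mult_ac)
        show "l1 + real n1 * (b / real n1) = l1 + b" using assms(2) by simp
        show "real (n2 - 1) * (- b / real n2) = - ((real n2 - 1) * (b / real n2))" using assms(3) by (simp add: of_nat_diff)
      qed
      with q have "(l2 - f) * (l1 + b / real n2 - f) = 0" by simp
      then have "f = l1 + b / real n2" using f1 by simp
      then have "b = real n2 * (f - l1)" using assms(3) by (simp add: field_simps)
      then have "b \<in> Bad" unfolding Bad_def using f by blast
      then show False using bB by simp
    qed
  qed
  moreover have "\<forall>i < n1 + n2. A $$ (i, i) \<notin> D"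
  proof (intro allI impI notI)
    fix i assume i: "i < n1 + n2" and iD: "A $$ (i, i) \<in> D"
    show False
    proof (cases "i < n1")
      case True
      then have "A $$ (i,i) = l1 + b / real n1" unfolding A_def blk_def using i by simp
      then have "b = real n1 * (A $$ (i,i) - l1)" using assms(2) by (simp add: field_simps)
      then have "b \<in> Bad" unfolding Bad_def using iD by blast
      then show False using bB by simp
    next
      case False
      then have "A $$ (i,i) = l2 - b / real n2" unfolding A_def blk_def using i by simp
      then have "b = real n2 * (l2 - A $$ (i,i))" using assms(3) by (simp add: field_simps)
      then have "b \<in> Bad" unfolding Bad_def using iD by blast
      then show False using bB by simp
    qed
  qed
  ultimately show ?thesis by blast
qed

end
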